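(* The equation $$p^{\alpha-2}(p^2-1)=q^{\beta-2}(q^2-1)$$ in integers $\alpha,\beta$ and primes $p<q$ has only finitely many solutions $(p,\alpha,q,\beta)$, namely exactly $(2,5,3,3)$, $(2,5,5,2)$, $(2,6,7,2)$, $(3,3,5,2)$ and $(5,3,11,2)$. *)

theory Defs
  imports Complex_Main "HOL-Computational_Algebra.Primes"
begin

end

theory Submission
  imports Defs
begin

lemma case_B_pos:
  fixes p q A B :: nat
  assumes pp: "prime p" and pq: "prime q" and lt: "p < q" and B: "B \<ge> 1"
    and eq: "p^A * (p^2 - 1) = q^B * (q^2 - 1)"
  shows "p = 2 \<and> A = 3 \<and> q = 3 \<and> B = 1"
proof -
  have p2: "p \<ge> 2" using pp prime_ge_2_nat by blast
  have "q dvd q^B * (q^2 - 1)" using B by (simp add: dvd_mult2)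
  hence d: "q dvd p^A * (p^2 - 1)" using eq by simp
  have nq: "\<not> q dvd p^A"
  proof
    assume "q dvd p^A"
    hence "q dvd p" using pq prime_dvd_power_nat by blast
    hence "q = p" using pp pq by (simp add: primes_dvd_imp_eq)
    thus False using lt by simp
  qed
  have "p^2 - 1 = (p - 1) * (p + 1)" using p2
    by (simp add: power2_eq_square algebra_simps)
  hence "q dvd (p - 1) * (p + 1)" using d nq pq prime_dvd_mult_iff by metis
  hence "q dvd p - 1 \<or> q dvd p + 1" using pq prime_dvd_mult_iff by blast
  moreover have "\<not> q dvd p - 1"
  proof
    assume "q dvd p - 1"
    hence "q \<le> p - 1" using p2 dvd_imp_le by fastforce
    thus False using lt by simp
  qed
  ultimately have "q dvd p + 1" by blast
  hence "q \<le> p + 1" using dvd_imp_le by fastforce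
  hence qp: "q = p + 1" using lt by simp
  have "p = 2"
  proof (rule ccontr)
    assume "p \<noteq> 2"
    hence "odd p" using pp p2 prime_odd_nat by fastforce
    hence "even q" using qp by simp
    hence "\<not> 2 < q" using prime_odd_nat[OF pq] by blast
    hence "q = 2" using prime_ge_2_nat[OF pq] by simp
    thus False using qp p2 by simp
  qed
  hence q3: "q = 3" using qp by simp
  obtain C where C: "B = Suc C" using B by (cases B) auto
  have e2: "2^A * 3 = 3^C * 3 * (8::nat)" using eq \<open>p = 2\<close> q3 C by simp
  hence e3: "2^A = 3^C * (8::nat)" by simp
  have "C = 0"
  proof (rule ccontr)
    assume "C \<noteq> 0"
    hence "(3::nat) dvd 3^C * 8" by simp
    hence "(3::nat) dvd 2^A" using e3 by simp
    moreover have p3: "prime (3::nat)" by code_simp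
    ultimately have "(3::nat) dvd 2" using prime_dvd_power_nat by blast
    thus False by simp
  qed
  hence h: "(2::nat)^A = 2^3" using e3 by simp
  have "A = 3" by (rule power_inject_exp[THEN iffD1, OF _ h]) simp
  thus ?thesis using \<open>p = 2\<close> q3 C \<open>C = 0\<close> by simp
qed

lemma case_p2:
  fixes q A :: nat
  assumes pq: "prime q" and lt: "2 < q"
    and eq: "2^A * 3 = q^2 - 1"
  shows "(A = 3 \<and> q = 5) \<or> (A = 4 \<and> q = 7)"
proof -
  have "odd q" using pq lt prime_odd_nat by blast
  then obtain r where r: "q = 2*r + 1" using oddE by blast
  have "q^2 - 1 = 4 * (r*(r+1))" using r by (simp add: power2_eq_square algebra_simps)
  hence e: "2^A * 3 = 4 * (r*(r+1))" using eq by simp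
  have d4: "(4::nat) dvd 2^A * 3" unfolding e by simp
  have "A \<noteq> 0" using d4 by (rule contrapos_pn) simp
  moreover have "A \<noteq> 1" using d4 by (rule contrapos_pn) simp
  ultimately obtain C where C: "A = C + 2" by (metis add_2_eq_Suc' not0_implies_Suc One_nat_def)
  hence e2: "3 * 2^C = r*(r+1)" using e by (simp add: power_add)
  have odd3: "\<And>d. odd d \<Longrightarrow> d dvd 3 * 2^C \<Longrightarrow> d dvd (3::nat)"
  proof -
    fix d :: nat assume "odd d" "d dvd 3 * 2^C"
    have "coprime d (2^C)" using \<open>odd d\<close> by simp
    thus "d dvd 3" using \<open>d dvd 3 * 2^C\<close> coprime_dvd_mult_left_iff by blast
  qed
  have d3: "\<And>d::nat. d dvd 3 \<Longrightarrow> d = 1 \<or> d = 3"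
  proof -
    fix d :: nat assume "d dvd 3"
    hence "d \<le> 3" "d > 0" using dvd_imp_le dvd_pos_nat[of 3 d] by auto
    hence "d = 1 \<or> d = 2 \<or> d = 3" by auto
    thus "d = 1 \<or> d = 3" using \<open>d dvd 3\<close> by auto
  qed
  have p3: "prime (3::nat)" by code_simp
  have n3: "\<not> (3::nat) dvd 2 ^ n" for n
  proof
    assume "(3::nat) dvd 2 ^ n"
    hence "(3::nat) dvd 2" using prime_dvd_power_nat[OF p3] by blast
    thus False by simp
  qed
  show ?thesis
  proof (cases "even r")
    case True
    hence "odd (r+1)" by simp
    moreover have "r + 1 dvd 3 * 2^C" unfolding e2 by (rule dvd_triv_right)
    ultimately have "r + 1 = 1 \<or> r + 1 = 3" using odd3 d3 by blast
    moreover have "r \<noteq> 0" using r lt by auto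
    ultimately have r2: "r = 2" by auto
    hence h: "(2::nat)^C = 2^1" using e2 by simp
    have "C = 1" by (rule power_inject_exp[THEN iffD1, OF _ h]) simp
    thus ?thesis using C r r2 by simp
  next
    case False
    moreover have "r dvd 3 * 2^C" unfolding e2 by (rule dvd_triv_left)
    ultimately have "r = 1 \<or> r = 3" using odd3 d3 by blast
    moreover have "r \<noteq> 1"
    proof
      assume "r = 1"
      hence "3 * 2^C = (2::nat)" using e2 by simp
      hence "(3::nat) dvd 2" by (metis dvd_triv_left)
      thus False by simp
    qed
    ultimately have r3: "r = 3" by auto
    hence h: "(2::nat)^C = 2^2" using e2 by simp
    have "C = 2" by (rule power_inject_exp[THEN iffD1, OF _ h]) simp
    thus ?thesis using C r r3 by simp
  qed
qed
lemma core:
  fixes p k e q :: int and A :: nat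
  assumes p3: "p \<ge> 3" and A: "A \<ge> 1" and e: "e = 1 \<or> e = -1"
    and eq: "k * (k * p^A + 2*e) = p^2 - 1" and q: "q = k * p^A + e" and lt: "p < q"
  shows "(p = 3 \<and> A = 1 \<and> q = 5) \<or> (p = 5 \<and> A = 1 \<and> q = 11)"
proof -
  have Ppos: "p^A > 0" using p3 by simp
  have k1: "k \<ge> 1"
  proof (rule ccontr)
    assume "\<not> k \<ge> 1"
    hence "k \<le> 0" by simp
    hence "k * p^A \<le> 0" using Ppos by (simp add: mult_nonpos_nonneg)
    thus False using q lt p3 e by auto
  qed
  show ?thesis
  proof (cases "A = 1")
    case False
    hence A2: "A \<ge> 2" using A by simp
    have Pge: "p^A \<ge> p^2" using A2 p3 by (simp add: power_increasing)
    show ?thesis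
    proof (cases "k = 1")
      case False
      hence k2: "k \<ge> 2" using k1 by simp
      have c1: "k * (k * p^A + 2*e) \<ge> k * (k * p^A - 2)" using e k1 by auto
      have c2: "k * (k * p^A - 2) = k*k*p^A - 2*k" by (simp add: algebra_simps)
      have "k*k \<ge> 2*k" using k2 by simp
      hence c3: "k*k*p^A \<ge> 2*k*p^A" using Ppos by (simp add: mult_right_mono)
      have c4: "4*(p^A - 1) \<le> (2*k)*(p^A - 1)" by (rule mult_right_mono) (use k2 Ppos in auto)
      have c5: "2*k*p^A - 2*k = 2*k*(p^A - 1)" by (simp add: algebra_simps)
      have "p^2 - 1 \<ge> 4*(p^A - 1)" using eq c1 c2 c3 c4 c5 by linarith
      moreover have "p^2 \<ge> 3^2" using p3 by (rule power_mono) simp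
      ultimately have False using Pge by simp
      thus ?thesis ..
    next
      case True
      hence e1: "p^A + 2*e = p^2 - 1" using eq by simp
      obtain B where B: "A = Suc (Suc B)" using A2 by (metis add_2_eq_Suc le_Suc_ex)
      have "p^A = p^2 * p^B" using B by (simp add: power_add[symmetric])
      have False
      proof (cases "B = 0")
        case True
        hence "2*e = -1" using e1 B by (simp add: power2_eq_square)
        thus False using assms(3) by presburger
      next
        case False
        hence "p^B \<ge> p" using p3 power_increasing[of 1 B p] by simp
        hence "p^A \<ge> p^2 * p" using \<open>p^A = p^2 * p^B\<close> p3 by (simp add: mult_left_mono)
        moreover have "p^2 * p \<ge> p^2 * 3" using p3 by (simp add: mult_left_mono)
        moreover have "p^2 > 0" using p3 by simp
        ultimately show False using e1 assms(3) by linarith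
      qed
      thus ?thesis ..
    qed
  next
    case True
    hence eq1: "k*k*p + 2*e*k = p^2 - 1" using eq by (simp add: algebra_simps)
    show ?thesis
    proof (cases "e = 1")
      case True
      define m where "m = p - k*k"
      have pm: "p * m = 1 + 2*k" using eq1 True unfolding m_def by (simp add: algebra_simps power2_eq_square)
      have m1: "m \<ge> 1"
      proof (rule ccontr)
        assume "\<not> m \<ge> 1" hence "m \<le> 0" by simp
        hence "p * m \<le> 0" using p3 by (simp add: mult_nonneg_nonpos)
        thus False using pm k1 by simp
      qed
      show ?thesis
      proof (cases "m = 1")
        case True
        hence "p = k*k + 1" using m_def by simp
        hence "k*k + 1 = 1 + 2*k" using pm True by simp
        hence "k * (k - 2) = 0" by (simp add: algebra_simps)
        hence "k = 2" using k1 by simp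
        thus ?thesis using \<open>p = k*k+1\<close> q \<open>A = 1\<close> \<open>e = 1\<close> by simp
      next
        case False
        hence "m \<ge> 2" using m1 by simp
        hence "p * m \<ge> p * 2" using p3 by (simp add: mult_left_mono)
        moreover have "k*k \<ge> k" using k1 by simp
        moreover have "p = k*k + m" using m_def by simp
        ultimately have False using pm \<open>m \<ge> 2\<close> by linarith
        thus ?thesis ..
      qed
    next
      case False
      hence em: "e = -1" using e by simp
      define m where "m = k*k - p"
      have pm: "p * m = 2*k - 1" using eq1 em unfolding m_def by (simp add: algebra_simps power2_eq_square)
      have m1: "m \<ge> 1"
      proof (rule ccontr)
        assume "\<not> m \<ge> 1" hence "m \<le> 0" by simp
        hence "p * m \<le> 0" using p3 by (simp add: mult_nonneg_nonpos)
        thus False using pm k1 by simp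
      qed
      show ?thesis
      proof (cases "m = 1")
        case True
        hence "p = k*k - 1" using m_def by simp
        hence "k*k - 1 = 2*k - 1" using pm True by simp
        hence "k * (k - 2) = 0" by (simp add: algebra_simps)
        hence "k = 2" using k1 by simp
        thus ?thesis using \<open>p = k*k-1\<close> q \<open>A = 1\<close> em by simp
      next
        case False
        hence m2: "m \<ge> 2" using m1 by simp
        hence a1: "p * m \<ge> p * 2" using p3 by (simp add: mult_left_mono)
        have a2: "p * m \<ge> 3 * m" using p3 m1 by (simp add: mult_right_mono)
        show ?thesis
        proof (cases "k \<ge> 2")
          case True
          hence "k*k \<ge> 2*k" by simp
          moreover have "p = k*k - m" using m_def by simp
          ultimately have False using a1 a2 pm m2 by linarith
          thus ?thesis ..
        next
          case False
          hence "k = 1" using k1 by simp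
          hence False using a2 pm m2 by simp
          thus ?thesis ..
        qed
      qed
    qed
  qed
qed

lemma case_odd:
  fixes p q A :: nat
  assumes pp: "prime p" and pq: "prime q" and lt: "p < q" and p2: "p \<noteq> 2"
    and eq: "p^A * (p^2 - 1) = q^2 - 1"
  shows "(p = 3 \<and> A = 1 \<and> q = 5) \<or> (p = 5 \<and> A = 1 \<and> q = 11)"
proof -
  have pge: "p \<ge> 2" using pp prime_ge_2_nat by blast
  hence p3: "p \<ge> 3" using p2 by simp
  have q1: "q \<ge> 1" using lt by simp
  have "int (p^A * (p^2 - 1)) = int (q^2 - 1)" using eq by simp
  hence ei: "int p ^ A * (int p ^ 2 - 1) = int q ^ 2 - 1"
    using pge q1 by (simp add: of_nat_diff)
  have A1: "A \<ge> 1"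
  proof (rule ccontr)
    assume "\<not> A \<ge> 1" hence "A = 0" by simp
    hence "int p ^ 2 = int q ^ 2" using ei by simp
    hence "p = q" by simp
    thus False using lt by simp
  qed
  have fq: "int q ^ 2 - 1 = (int q - 1) * (int q + 1)" by (simp add: algebra_simps power2_eq_square)
  have dv: "int p ^ A dvd (int q - 1) * (int q + 1)" using ei fq by (metis dvd_triv_left)
  have ppi: "prime (int p)" using pp by simp
  have notboth: "\<not> (int p dvd int q - 1 \<and> int p dvd int q + 1)"
  proof
    assume "int p dvd int q - 1 \<and> int p dvd int q + 1"
    hence "int p dvd (int q + 1) - (int q - 1)" using dvd_diff by blast
    hence "int p dvd 2" by simp
    hence "int p \<le> 2" using zdvd_imp_le by fastforce
    thus False using p3 by simp
  qed
  obtain k e where ke: "e = 1 \<or> e = -1" "int q = k * int p ^ A + e"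
  proof (cases "int p dvd int q + 1")
    case False
    hence "coprime (int p) (int q + 1)" using ppi prime_imp_coprime by blast
    hence "coprime (int p ^ A) (int q + 1)" by simp
    hence "int p ^ A dvd int q - 1" using dv coprime_dvd_mult_left_iff by blast
    then obtain k where "int q - 1 = int p ^ A * k" by (elim dvdE)
    thus ?thesis using that[of 1 k] by (simp add: algebra_simps)
  next
    case True
    hence "\<not> int p dvd int q - 1" using notboth by blast
    hence "coprime (int p) (int q - 1)" using ppi prime_imp_coprime by blast
    hence "coprime (int p ^ A) (int q - 1)" by simp
    hence "int p ^ A dvd int q + 1" using dv coprime_dvd_mult_right_iff by blast
    then obtain k where "int q + 1 = int p ^ A * k" by (elim dvdE)
    thus ?thesis using that[of "-1" k] by (simp add: algebra_simps)
  qed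
  have "(int q - 1) * (int q + 1) = (k * int p ^ A) * (k * int p ^ A + 2*e)"
    using ke by (auto simp: algebra_simps)
  hence "int p ^ A * (k * (k * int p ^ A + 2*e)) = int p ^ A * (int p ^ 2 - 1)"
    using ei fq by (simp add: algebra_simps)
  hence eqk: "k * (k * int p ^ A + 2*e) = int p ^ 2 - 1" using p3 by simp
  have "(int p = 3 \<and> A = 1 \<and> int q = 5) \<or> (int p = 5 \<and> A = 1 \<and> int q = 11)"
    by (rule core[OF _ A1 ke(1) eqk ke(2)]) (use p3 lt in auto)
  thus ?thesis by auto
qed

lemma powi_split: "(x::real) \<noteq> 0 \<Longrightarrow> x powi a = x ^ nat a / x ^ nat (-a)"
  by (simp add: power_int_def power_inverse divide_inverse)

lemma not_dvd_side:
  fixes p q X Y N M :: nat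
  assumes pp: "prime p" and pq: "prime q" and ne: "p \<noteq> q" and M: "M > 0"
    and eq: "q^N * (p^2 - 1) = Y * p^M"
  shows False
proof -
  have "p dvd Y * p^M" using M by simp
  hence "p dvd q^N * (p^2 - 1)" using eq by simp
  moreover have "\<not> p dvd q^N"
  proof
    assume "p dvd q^N"
    hence "p dvd q" using pp prime_dvd_power_nat by blast
    thus False using pp pq ne by (simp add: primes_dvd_imp_eq)
  qed
  ultimately have "p dvd p^2 - 1" using pp prime_dvd_mult_iff by blast
  moreover have "p dvd p^2" by (simp add: power2_eq_square)
  ultimately have "p dvd p^2 - (p^2 - 1)" using dvd_diff_nat by blast
  moreover have "p^2 - (p^2 - 1) = 1" using pp prime_ge_1_nat by (simp add: power2_eq_square)
  ultimately have "p dvd 1" by simp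
  thus False using pp by simp
qed

lemma reduction:
  fixes p q :: nat and a b :: int
  assumes pp: "prime p" and pq: "prime q" and lt: "p < q"
    and eq: "real p powi a * ((real p)^2 - 1) = real q powi b * ((real q)^2 - 1)"
  shows "\<exists>A B. a = int A \<and> b = int B \<and> p^A * (p^2 - 1) = q^B * (q^2 - 1)"
proof -
  define A A' B B' where "A = nat a" "A' = nat (-a)" "B = nat b" "B' = nat (-b)"
  have p1: "p \<ge> 1" "q \<ge> 1" using pp pq prime_ge_1_nat by auto
  have rp: "(real p)^2 - 1 = real (p^2 - 1)" "(real q)^2 - 1 = real (q^2 - 1)"
    using p1 by (simp_all add: of_nat_diff)
  have hp: "real p powi a = real p ^ A / real p ^ A'" unfolding A_A'_B_B'_def
    by (rule powi_split) (use p1 in simp)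
  have hq: "real q powi b = real q ^ B / real q ^ B'" unfolding A_A'_B_B'_def
    by (rule powi_split) (use p1 in simp)
  have "real p ^ A / real p ^ A' * real (p^2 - 1) = real q ^ B / real q ^ B' * real (q^2 - 1)"
    using eq unfolding hp hq rp .
  hence "real p ^ A * real q ^ B' * real (p^2 - 1) = real q ^ B * real p ^ A' * real (q^2 - 1)"
    using p1 by (simp add: field_simps)
  hence "real (p ^ A * q ^ B' * (p^2 - 1)) = real (q ^ B * p ^ A' * (q^2 - 1))"
    unfolding of_nat_mult of_nat_power .
  hence en: "p ^ A * q ^ B' * (p^2 - 1) = q ^ B * p ^ A' * (q^2 - 1)"
    by (simp only: of_nat_eq_iff)
  have A'0: "A' = 0"
  proof (rule ccontr)
    assume "A' \<noteq> 0"
    hence "A = 0" unfolding A_A'_B_B'_def by simp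
    hence "q ^ B' * (p^2 - 1) = (q ^ B * (q^2 - 1)) * p ^ A'" using en by (simp add: mult_ac)
    thus False using not_dvd_side[OF pp pq] lt \<open>A' \<noteq> 0\<close> by auto
  qed
  have B'0: "B' = 0"
  proof (rule ccontr)
    assume "B' \<noteq> 0"
    hence "B = 0" unfolding A_A'_B_B'_def by simp
    hence "p ^ A' * (q^2 - 1) = (p ^ A * (p^2 - 1)) * q ^ B'" using en by (simp add: mult_ac)
    thus False using not_dvd_side[OF pq pp] lt \<open>B' \<noteq> 0\<close> by auto
  qed
  have "a = int A" "b = int B" using A'0 B'0 unfolding A_A'_B_B'_def by auto
  moreover have "p^A * (p^2 - 1) = q^B * (q^2 - 1)" using en A'0 B'0 by simp
  ultimately show ?thesis by blast
qed


theorem proposition1: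
  "{(p::nat, \<alpha>::int, q::nat, \<beta>::int).
      prime p \<and> prime q \<and> p < q \<and>
      real p powi (\<alpha> - 2) * ((real p)\<^sup>2 - 1) = real q powi (\<beta> - 2) * ((real q)\<^sup>2 - 1)}
   = {(2::nat, 5::int, 3::nat, 3::int), (2, 5, 5, 2), (2, 6, 7, 2), (3, 3, 5, 2), (5, 3, 11, 2)}"
  (is "?L = ?R")
proof
  show "?L \<subseteq> ?R"
  proof (rule subsetI)
    fix x assume x: "x \<in> ?L"
    obtain p \<alpha> q \<beta> where xe: "x = (p, \<alpha>, q, \<beta>)" using prod_cases4 by blast
    have pp: "prime p" and pq: "prime q" and lt: "p < q"
      and eq: "real p powi (\<alpha> - 2) * ((real p)\<^sup>2 - 1) = real q powi (\<beta> - 2) * ((real q)\<^sup>2 - 1)"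
      using x unfolding xe by simp_all
    obtain A B where AB: "\<alpha> - 2 = int A" "\<beta> - 2 = int B" and en: "p^A * (p^2 - 1) = q^B * (q^2 - 1)"
      using reduction[OF pp pq lt eq] by blast
    have cs: "(p = 2 \<and> A = 3 \<and> q = 3 \<and> B = 1) \<or> (p = 2 \<and> A = 3 \<and> q = 5 \<and> B = 0)
       \<or> (p = 2 \<and> A = 4 \<and> q = 7 \<and> B = 0) \<or> (p = 3 \<and> A = 1 \<and> q = 5 \<and> B = 0)
       \<or> (p = 5 \<and> A = 1 \<and> q = 11 \<and> B = 0)"
    proof (cases "B \<ge> 1")
      case True
      thus ?thesis using case_B_pos[OF pp pq lt True en] by blast
    next
      case False
      hence B0: "B = 0" by simp
      hence en0: "p^A * (p^2 - 1) = q^2 - 1" using en by simp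
      show ?thesis
      proof (cases "p = 2")
        case True
        hence "2^A * 3 = q^2 - 1" using en0 by simp
        thus ?thesis using case_p2[OF pq] lt True B0 by auto
      next
        case False
        thus ?thesis using case_odd[OF pp pq lt False en0] B0 by blast
      qed
    qed
    have "(p = 2 \<and> \<alpha> = 5 \<and> q = 3 \<and> \<beta> = 3) \<or> (p = 2 \<and> \<alpha> = 5 \<and> q = 5 \<and> \<beta> = 2)
       \<or> (p = 2 \<and> \<alpha> = 6 \<and> q = 7 \<and> \<beta> = 2) \<or> (p = 3 \<and> \<alpha> = 3 \<and> q = 5 \<and> \<beta> = 2)
       \<or> (p = 5 \<and> \<alpha> = 3 \<and> q = 11 \<and> \<beta> = 2)"
    proof -
      have ab: "\<alpha> = int A + 2" "\<beta> = int B + 2" using AB by simp_all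
      show ?thesis using cs unfolding ab by (elim disjE) simp_all
    qed
    thus "x \<in> ?R" unfolding xe by (elim disjE) simp_all
  qed
next
  have "prime (2::nat)" "prime (3::nat)" "prime (5::nat)" "prime (7::nat)" "prime (11::nat)"
    by code_simp+
  moreover have "real 2 powi (5 - 2) * ((real 2)\<^sup>2 - 1) = real 3 powi (3 - 2) * ((real 3)\<^sup>2 - 1)"
    "real 2 powi (5 - 2) * ((real 2)\<^sup>2 - 1) = real 5 powi (2 - 2) * ((real 5)\<^sup>2 - 1)"
    "real 2 powi (6 - 2) * ((real 2)\<^sup>2 - 1) = real 7 powi (2 - 2) * ((real 7)\<^sup>2 - 1)"
    "real 3 powi (3 - 2) * ((real 3)\<^sup>2 - 1) = real 5 powi (2 - 2) * ((real 5)\<^sup>2 - 1)"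
    "real 5 powi (3 - 2) * ((real 5)\<^sup>2 - 1) = real 11 powi (2 - 2) * ((real 11)\<^sup>2 - 1)"
    by (simp_all add: power_int_def)
  ultimately show "?R \<subseteq> ?L" by simp
qed
end
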